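(* The variety $\mathcal{WHB}$ of WHB-algebras has the amalgamation property: for all WHB-algebras $\mathbf A,\mathbf B,\mathbf C$ and injective homomorphisms $i\colon\mathbf A\to\mathbf B$, $j\colon\mathbf A\to\mathbf C$, there exist a WHB-algebra $\mathbf D$ and injective homomorphisms $h\colon\mathbf B\to\mathbf D$, $k\colon\mathbf C\to\mathbf D$ with $h\circ i=k\circ j$.
   Context: A WHB-algebra is an algebra $(A,\wedge,\vee,\to,\leftarrow,0,1)$ such that $(A,\wedge,\vee,0,1)$ is a bounded distributive lattice and for all $a,b,c\in A$: $a\to a=1$; $a\to(b\wedge c)=(a\to b)\wedge(a\to c)$; $(a\vee b)\to c=(a\to c)\wedge(b\to c)$; $(a\to b)\wedge(b\to c)\le a\to c$; $a\leftarrow a=0$; $(a\vee b)\leftarrow c=(a\leftarrow c)\vee(b\leftarrow c)$; $a\leftarrow(b\wedge c)=(a\leftarrow b)\vee(a\leftarrow c)$; $a\leftarrow c\le(a\leftarrow b)\vee(b\leftarrow c)$; $a\wedge((a\to b)\leftarrow 0)\le b$; $a\le b\vee(1\to(a\leftarrow b))$. *)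

theory Defs
  imports Main
begin

record 'a whb_alg =
  carrier :: "'a set"
  meet :: "'a \<Rightarrow> 'a \<Rightarrow> 'a"
  join :: "'a \<Rightarrow> 'a \<Rightarrow> 'a"
  imp :: "'a \<Rightarrow> 'a \<Rightarrow> 'a"
  coimp :: "'a \<Rightarrow> 'a \<Rightarrow> 'a"
  bot :: "'a"
  top :: "'a"

definition leq :: "('a, 'm) whb_alg_scheme \<Rightarrow> 'a \<Rightarrow> 'a \<Rightarrow> bool" where
  "leq A a b \<longleftrightarrow> meet A a b = a"

definition whb_algebra :: "('a, 'm) whb_alg_scheme \<Rightarrow> bool" where
  "whb_algebra A \<longleftrightarrow>
    \<comment> \<open>closure of the carrier under the operations\<close>
    bot A \<in> carrier A \<and> top A \<in> carrier A \<and>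
    (\<forall>a\<in>carrier A. \<forall>b\<in>carrier A.
       meet A a b \<in> carrier A \<and> join A a b \<in> carrier A \<and>
       imp A a b \<in> carrier A \<and> coimp A a b \<in> carrier A) \<and>
    \<comment> \<open>bounded distributive lattice\<close>
    (\<forall>a\<in>carrier A. \<forall>b\<in>carrier A. \<forall>c\<in>carrier A.
       meet A a (meet A b c) = meet A (meet A a b) c \<and>
       join A a (join A b c) = join A (join A a b) c \<and>
       meet A a b = meet A b a \<and> join A a b = join A b a \<and>
       meet A a (join A a b) = a \<and> join A a (meet A a b) = a \<and>
       meet A a (join A b c) = join A (meet A a b) (meet A a c) \<and>
       meet A a (bot A) = bot A \<and> join A a (top A) = top A) \<and>
    \<comment> \<open>WHB axioms\<close>
    (\<forall>a\<in>carrier A. \<forall>b\<in>carrier A. \<forall>c\<in>carrier A.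
       imp A a a = top A \<and>
       imp A a (meet A b c) = meet A (imp A a b) (imp A a c) \<and>
       imp A (join A a b) c = meet A (imp A a c) (imp A b c) \<and>
       leq A (meet A (imp A a b) (imp A b c)) (imp A a c) \<and>
       coimp A a a = bot A \<and>
       coimp A (join A a b) c = join A (coimp A a c) (coimp A b c) \<and>
       coimp A a (meet A b c) = join A (coimp A a b) (coimp A a c) \<and>
       leq A (coimp A a c) (join A (coimp A a b) (coimp A b c)) \<and>
       leq A (meet A a (coimp A (imp A a b) (bot A))) b \<and>
       leq A a (join A b (imp A (top A) (coimp A a b))))"

definition whb_hom ::
  "('a, 'm) whb_alg_scheme \<Rightarrow> ('b, 'n) whb_alg_scheme \<Rightarrow> ('a \<Rightarrow> 'b) \<Rightarrow> bool" where
  "whb_hom A B f \<longleftrightarrow>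
    (\<forall>a\<in>carrier A. f a \<in> carrier B) \<and>
    f (bot A) = bot B \<and> f (top A) = top B \<and>
    (\<forall>a\<in>carrier A. \<forall>b\<in>carrier A.
       f (meet A a b) = meet B (f a) (f b) \<and>
       f (join A a b) = join B (f a) (f b) \<and>
       f (imp A a b) = imp B (f a) (f b) \<and>
       f (coimp A a b) = coimp B (f a) (f b))"

definition whb_emb ::
  "('a, 'm) whb_alg_scheme \<Rightarrow> ('b, 'n) whb_alg_scheme \<Rightarrow> ('a \<Rightarrow> 'b) \<Rightarrow> bool" where
  "whb_emb A B f \<longleftrightarrow> whb_hom A B f \<and> inj_on f (carrier A)"

end

theory Submission
  imports Defs
begin

locale whb =
  fixes L :: "('a, 'm) whb_alg_scheme"
  assumes alg: "whb_algebra L"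
begin

abbreviation "K \<equiv> carrier L"

lemma bot_in[simp]: "bot L \<in> K" using alg unfolding whb_algebra_def by blast
lemma top_in[simp]: "top L \<in> K" using alg unfolding whb_algebra_def by blast
lemma meet_in[simp]: "a \<in> K \<Longrightarrow> b \<in> K \<Longrightarrow> meet L a b \<in> K" using alg unfolding whb_algebra_def by blast
lemma join_in[simp]: "a \<in> K \<Longrightarrow> b \<in> K \<Longrightarrow> join L a b \<in> K" using alg unfolding whb_algebra_def by blast
lemma imp_in[simp]: "a \<in> K \<Longrightarrow> b \<in> K \<Longrightarrow> imp L a b \<in> K" using alg unfolding whb_algebra_def by blast
lemma coimp_in[simp]: "a \<in> K \<Longrightarrow> b \<in> K \<Longrightarrow> coimp L a b \<in> K" using alg unfolding whb_algebra_def by blast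

lemma Lat: "\<forall>a\<in>K. \<forall>b\<in>K. \<forall>c\<in>K.
       meet L a (meet L b c) = meet L (meet L a b) c \<and>
       join L a (join L b c) = join L (join L a b) c \<and>
       meet L a b = meet L b a \<and> join L a b = join L b a \<and>
       meet L a (join L a b) = a \<and> join L a (meet L a b) = a \<and>
       meet L a (join L b c) = join L (meet L a b) (meet L a c) \<and>
       meet L a (bot L) = bot L \<and> join L a (top L) = top L"
  using alg unfolding whb_algebra_def by (elim conjE) assumption
lemma Whb: "\<forall>a\<in>K. \<forall>b\<in>K. \<forall>c\<in>K.
       imp L a a = top L \<and>
       imp L a (meet L b c) = meet L (imp L a b) (imp L a c) \<and>
       imp L (join L a b) c = meet L (imp L a c) (imp L b c) \<and>
       leq L (meet L (imp L a b) (imp L b c)) (imp L a c) \<and>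
       coimp L a a = bot L \<and>
       coimp L (join L a b) c = join L (coimp L a c) (coimp L b c) \<and>
       coimp L a (meet L b c) = join L (coimp L a b) (coimp L a c) \<and>
       leq L (coimp L a c) (join L (coimp L a b) (coimp L b c)) \<and>
       leq L (meet L a (coimp L (imp L a b) (bot L))) b \<and>
       leq L a (join L b (imp L (top L) (coimp L a b)))"
  using alg unfolding whb_algebra_def by (elim conjE) assumption

context
  fixes a b c assumes abc: "a \<in> K" "b \<in> K" "c \<in> K"
begin
lemma meet_assoc: "meet L a (meet L b c) = meet L (meet L a b) c" using Lat[rule_format, OF abc] Whb[rule_format, OF abc] by blast
lemma join_assoc: "join L a (join L b c) = join L (join L a b) c" using Lat[rule_format, OF abc] Whb[rule_format, OF abc] by blast
lemma distrib: "meet L a (join L b c) = join L (meet L a b) (meet L a c)" using Lat[rule_format, OF abc] Whb[rule_format, OF abc] by blast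
lemma imp_meet: "imp L a (meet L b c) = meet L (imp L a b) (imp L a c)" using Lat[rule_format, OF abc] Whb[rule_format, OF abc] by blast
lemma imp_join: "imp L (join L a b) c = meet L (imp L a c) (imp L b c)" using Lat[rule_format, OF abc] Whb[rule_format, OF abc] by blast
lemma imp_trans: "leq L (meet L (imp L a b) (imp L b c)) (imp L a c)" using Lat[rule_format, OF abc] Whb[rule_format, OF abc] by blast
lemma coimp_join: "coimp L (join L a b) c = join L (coimp L a c) (coimp L b c)" using Lat[rule_format, OF abc] Whb[rule_format, OF abc] by blast
lemma coimp_meet: "coimp L a (meet L b c) = join L (coimp L a b) (coimp L a c)" using Lat[rule_format, OF abc] Whb[rule_format, OF abc] by blast
lemma coimp_trans: "leq L (coimp L a c) (join L (coimp L a b) (coimp L b c))" using Lat[rule_format, OF abc] Whb[rule_format, OF abc] by blast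
end

context
  fixes a b assumes ab: "a \<in> K" "b \<in> K"
begin
lemma meet_comm: "meet L a b = meet L b a" using Lat[rule_format, OF ab ab(1)] Whb[rule_format, OF ab ab(1)] by blast
lemma join_comm: "join L a b = join L b a" using Lat[rule_format, OF ab ab(1)] Whb[rule_format, OF ab ab(1)] by blast
lemma absorb1: "meet L a (join L a b) = a" using Lat[rule_format, OF ab ab(1)] Whb[rule_format, OF ab ab(1)] by blast
lemma absorb2: "join L a (meet L a b) = a" using Lat[rule_format, OF ab ab(1)] Whb[rule_format, OF ab ab(1)] by blast
lemma meet_bot: "meet L a (bot L) = bot L" using Lat[rule_format, OF ab ab(1)] Whb[rule_format, OF ab ab(1)] by blast
lemma join_top: "join L a (top L) = top L" using Lat[rule_format, OF ab ab(1)] Whb[rule_format, OF ab ab(1)] by blast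
lemma imp_refl: "imp L a a = top L" using Lat[rule_format, OF ab ab(1)] Whb[rule_format, OF ab ab(1)] by blast
lemma coimp_refl: "coimp L a a = bot L" using Lat[rule_format, OF ab ab(1)] Whb[rule_format, OF ab ab(1)] by blast
lemma ax9: "leq L (meet L a (coimp L (imp L a b) (bot L))) b" using Lat[rule_format, OF ab ab(1)] Whb[rule_format, OF ab ab(1)] by blast
lemma ax10: "leq L a (join L b (imp L (top L) (coimp L a b)))" using Lat[rule_format, OF ab ab(1)] Whb[rule_format, OF ab ab(1)] by blast
end


lemma meet_idem: "a \<in> K \<Longrightarrow> meet L a a = a"
  using absorb1[of a "meet L a a"] absorb2[of a a] by simp

lemma leq_refl: "a \<in> K \<Longrightarrow> leq L a a" by (simp add: leq_def meet_idem)

lemma leq_trans: "a \<in> K \<Longrightarrow> b \<in> K \<Longrightarrow> c \<in> K \<Longrightarrow> leq L a b \<Longrightarrow> leq L b c \<Longrightarrow> leq L a c"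
  unfolding leq_def using meet_assoc[of a b c] by simp

lemma leq_antisym: "a \<in> K \<Longrightarrow> b \<in> K \<Longrightarrow> leq L a b \<Longrightarrow> leq L b a \<Longrightarrow> a = b"
  unfolding leq_def using meet_comm[of a b] by simp

lemma meet_leq1: "a \<in> K \<Longrightarrow> b \<in> K \<Longrightarrow> leq L (meet L a b) a"
  unfolding leq_def using meet_assoc[of a b a] meet_comm[of b a] meet_assoc[of a a b] meet_idem[of a] by simp

lemma meet_leq2: "a \<in> K \<Longrightarrow> b \<in> K \<Longrightarrow> leq L (meet L a b) b"
  using meet_comm[of a b] meet_leq1[of b a] by simp

lemma leq_meetI: "a \<in> K \<Longrightarrow> b \<in> K \<Longrightarrow> c \<in> K \<Longrightarrow> leq L c a \<Longrightarrow> leq L c b \<Longrightarrow> leq L c (meet L a b)"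
  unfolding leq_def using meet_assoc[of c a b] by simp

lemma leq_join_iff: "a \<in> K \<Longrightarrow> b \<in> K \<Longrightarrow> leq L a b \<longleftrightarrow> join L a b = b"
  unfolding leq_def using absorb1[of a b] absorb2[of b a] join_comm[of a b] meet_comm[of a b]
  by (metis)

lemma join_leq1: "a \<in> K \<Longrightarrow> b \<in> K \<Longrightarrow> leq L a (join L a b)"
  unfolding leq_def by (simp add: absorb1)

lemma join_leq2: "a \<in> K \<Longrightarrow> b \<in> K \<Longrightarrow> leq L b (join L a b)"
  using join_comm[of a b] join_leq1[of b a] by simp

lemma join_leqI: "a \<in> K \<Longrightarrow> b \<in> K \<Longrightarrow> c \<in> K \<Longrightarrow> leq L a c \<Longrightarrow> leq L b c \<Longrightarrow> leq L (join L a b) c"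
  using leq_join_iff[of a c] leq_join_iff[of b c] leq_join_iff[of "join L a b" c] join_assoc[of a b c]
  by simp

lemma bot_leq: "a \<in> K \<Longrightarrow> leq L (bot L) a"
  unfolding leq_def using meet_bot[of a] meet_comm[of a "bot L"] by simp

lemma leq_top: "a \<in> K \<Longrightarrow> leq L a (top L)"
  using join_top[of a] leq_join_iff[of a "top L"] by simp

lemma meet_mono: "a \<in> K \<Longrightarrow> b \<in> K \<Longrightarrow> a' \<in> K \<Longrightarrow> b' \<in> K \<Longrightarrow> leq L a a' \<Longrightarrow> leq L b b' \<Longrightarrow> leq L (meet L a b) (meet L a' b')"
  by (meson leq_meetI leq_trans meet_in meet_leq1 meet_leq2)

lemma join_mono: "a \<in> K \<Longrightarrow> b \<in> K \<Longrightarrow> a' \<in> K \<Longrightarrow> b' \<in> K \<Longrightarrow> leq L a a' \<Longrightarrow> leq L b b' \<Longrightarrow> leq L (join L a b) (join L a' b')"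
  by (meson join_leqI leq_trans join_in join_leq1 join_leq2)

lemma imp_anti: "a \<in> K \<Longrightarrow> a' \<in> K \<Longrightarrow> b \<in> K \<Longrightarrow> leq L a' a \<Longrightarrow> leq L (imp L a b) (imp L a' b)"
proof -
  assume h: "a \<in> K" "a' \<in> K" "b \<in> K" "leq L a' a"
  have e: "meet L (imp L a' b) (imp L a b) = imp L a b"
    using imp_join[of a' a b] leq_join_iff[of a' a] h by simp
  show ?thesis using meet_leq1[of "imp L a' b" "imp L a b"] e h by simp
qed

lemma imp_mono: "a \<in> K \<Longrightarrow> b \<in> K \<Longrightarrow> b' \<in> K \<Longrightarrow> leq L b b' \<Longrightarrow> leq L (imp L a b) (imp L a b')"
  using imp_meet[of a b b'] meet_leq2[of "imp L a b" "imp L a b'"] unfolding leq_def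
  by simp

lemma imp_mono2: "a \<in> K \<Longrightarrow> b \<in> K \<Longrightarrow> a' \<in> K \<Longrightarrow> b' \<in> K \<Longrightarrow> leq L a' a \<Longrightarrow> leq L b b' \<Longrightarrow> leq L (imp L a b) (imp L a' b')"
  by (meson imp_anti imp_in imp_mono leq_trans)

lemma coimp_mono: "a \<in> K \<Longrightarrow> a' \<in> K \<Longrightarrow> b \<in> K \<Longrightarrow> leq L a a' \<Longrightarrow> leq L (coimp L a b) (coimp L a' b)"
  using coimp_join[of a a' b] leq_join_iff[of a a'] join_leq1[of "coimp L a b" "coimp L a' b"] by simp

lemma coimp_anti: "a \<in> K \<Longrightarrow> b \<in> K \<Longrightarrow> b' \<in> K \<Longrightarrow> leq L b' b \<Longrightarrow> leq L (coimp L a b) (coimp L a b')"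
  using coimp_meet[of a b b'] join_leq1[of "coimp L a b" "coimp L a b'"] meet_comm[of b' b] unfolding leq_def
  by simp

lemma coimp_mono2: "a \<in> K \<Longrightarrow> b \<in> K \<Longrightarrow> a' \<in> K \<Longrightarrow> b' \<in> K \<Longrightarrow> leq L a a' \<Longrightarrow> leq L b' b \<Longrightarrow> leq L (coimp L a b) (coimp L a' b')"
  by (meson coimp_anti coimp_in coimp_mono leq_trans)

end

context whb begin

definition filt :: "'a set \<Rightarrow> bool" where
  "filt F \<longleftrightarrow> F \<subseteq> K \<and> top L \<in> F \<and> (\<forall>x\<in>F. \<forall>y\<in>F. meet L x y \<in> F)
     \<and> (\<forall>x\<in>F. \<forall>y\<in>K. leq L x y \<longrightarrow> y \<in> F)"

definition prime :: "'a set \<Rightarrow> bool" where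
  "prime P \<longleftrightarrow> filt P \<and> bot L \<notin> P \<and> (\<forall>x\<in>K. \<forall>y\<in>K. join L x y \<in> P \<longrightarrow> x \<in> P \<or> y \<in> P)"

definition sgood :: "('a \<Rightarrow> 'a \<Rightarrow> bool) \<Rightarrow> bool" where
  "sgood S \<longleftrightarrow> (\<forall>x\<in>K. S x x)
    \<and> (\<forall>x\<in>K. \<forall>y\<in>K. \<forall>z\<in>K. S x y \<longrightarrow> S y z \<longrightarrow> S x z)
    \<and> (\<forall>x\<in>K. \<forall>y\<in>K. \<forall>x'\<in>K. \<forall>y'\<in>K. S x y \<longrightarrow> leq L x' x \<longrightarrow> leq L y y' \<longrightarrow> S x' y')
    \<and> (\<forall>x1\<in>K. \<forall>y1\<in>K. \<forall>x2\<in>K. \<forall>y2\<in>K. S x1 y1 \<longrightarrow> S x2 y2 \<longrightarrow> S (meet L x1 x2) (meet L y1 y2))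
    \<and> (\<forall>x1\<in>K. \<forall>y1\<in>K. \<forall>x2\<in>K. \<forall>y2\<in>K. S x1 y1 \<longrightarrow> S x2 y2 \<longrightarrow> S (join L x1 x2) (join L y1 y2))"

lemma filt_sub: "filt F \<Longrightarrow> x \<in> F \<Longrightarrow> x \<in> K" unfolding filt_def by blast
lemma filt_top: "filt F \<Longrightarrow> top L \<in> F" unfolding filt_def by blast
lemma filt_meet: "filt F \<Longrightarrow> x \<in> F \<Longrightarrow> y \<in> F \<Longrightarrow> meet L x y \<in> F" unfolding filt_def by blast
lemma filt_up: "filt F \<Longrightarrow> x \<in> F \<Longrightarrow> y \<in> K \<Longrightarrow> leq L x y \<Longrightarrow> y \<in> F" unfolding filt_def by blast

lemma prime_filt: "prime P \<Longrightarrow> filt P" unfolding prime_def by blast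
lemma prime_sub: "prime P \<Longrightarrow> x \<in> P \<Longrightarrow> x \<in> K" unfolding prime_def filt_def by blast
lemma prime_top: "prime P \<Longrightarrow> top L \<in> P" unfolding prime_def filt_def by blast
lemma prime_bot: "prime P \<Longrightarrow> bot L \<notin> P" unfolding prime_def by blast
lemma prime_up: "prime P \<Longrightarrow> x \<in> P \<Longrightarrow> y \<in> K \<Longrightarrow> leq L x y \<Longrightarrow> y \<in> P" unfolding prime_def filt_def by blast
lemma prime_meet: "prime P \<Longrightarrow> x \<in> K \<Longrightarrow> y \<in> K \<Longrightarrow> meet L x y \<in> P \<longleftrightarrow> x \<in> P \<and> y \<in> P"
  using prime_up[of P "meet L x y" x] prime_up[of P "meet L x y" y] meet_leq1[of x y] meet_leq2[of x y]
    filt_meet[OF prime_filt, of P x y] by blast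
lemma prime_join: "prime P \<Longrightarrow> x \<in> K \<Longrightarrow> y \<in> K \<Longrightarrow> join L x y \<in> P \<longleftrightarrow> x \<in> P \<or> y \<in> P"
  using prime_up[of P x "join L x y"] prime_up[of P y "join L x y"] join_leq1[of x y] join_leq2[of x y]
   unfolding prime_def by auto

lemma up_filt:
  assumes a: "a \<in> K" shows "filt {x \<in> K. leq L a x}"
  unfolding filt_def
proof (intro conjI ballI impI)
  show "top L \<in> {x \<in> K. leq L a x}" using a leq_top by simp
next
  fix x y assume "x \<in> {x \<in> K. leq L a x}" "y \<in> {x \<in> K. leq L a x}"
  then show "meet L x y \<in> {x \<in> K. leq L a x}" using a leq_meetI by simp
next
  fix x y assume "x \<in> {x \<in> K. leq L a x}" "y \<in> K" "leq L x y"
  then show "y \<in> {x \<in> K. leq L a x}" using a leq_trans[of a x y] by simp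
qed simp

lemma ext_filt:
  assumes G: "filt G" and y: "y \<in> K"
  shows "filt {z \<in> K. \<exists>g\<in>G. leq L (meet L g y) z}" (is "filt ?H")
  unfolding filt_def
proof (intro conjI ballI impI)
  show "?H \<subseteq> K" by blast
  have "top L \<in> G" using filt_top[OF G] .
  moreover have "leq L (meet L (top L) y) (top L)" using leq_top y by simp
  ultimately show "top L \<in> ?H" by auto
next
  fix u v assume "u \<in> ?H" "v \<in> ?H"
  then obtain g1 g2 where g: "g1 \<in> G" "g2 \<in> G" "u \<in> K" "v \<in> K"
    "leq L (meet L g1 y) u" "leq L (meet L g2 y) v" by blast
  have k: "g1 \<in> K" "g2 \<in> K" using g filt_sub G by auto
  have m: "meet L g1 g2 \<in> G" using filt_meet[OF G g(1,2)] .
  have a1: "leq L (meet L (meet L g1 g2) y) (meet L g1 y)"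
    using meet_mono[of "meet L g1 g2" y g1 y] meet_leq1[of g1 g2] leq_refl[of y] k y by simp
  have a2: "leq L (meet L (meet L g1 g2) y) (meet L g2 y)"
    using meet_mono[of "meet L g1 g2" y g2 y] meet_leq2[of g1 g2] leq_refl[of y] k y by simp
  have "leq L (meet L (meet L g1 g2) y) (meet L u v)"
    using leq_trans[OF _ _ _ a1 g(5)] leq_trans[OF _ _ _ a2 g(6)] leq_meetI[of u v] k y g by simp
  then show "meet L u v \<in> ?H" using m g by auto
next
  fix u v assume u: "u \<in> ?H" and v: "v \<in> K" "leq L u v"
  then obtain g where "g \<in> G" "leq L (meet L g y) u" "u \<in> K" by blast
  moreover have "g \<in> K" using calculation filt_sub G by auto
  ultimately show "v \<in> ?H" using leq_trans[of "meet L g y" u v] v y by auto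
qed

lemma ext_sub: "filt G \<Longrightarrow> y \<in> K \<Longrightarrow> G \<subseteq> {z \<in> K. \<exists>g\<in>G. leq L (meet L g y) z}"
proof
  fix x assume "filt G" "y \<in> K" "x \<in> G"
  then show "x \<in> {z \<in> K. \<exists>g\<in>G. leq L (meet L g y) z}"
    using filt_sub[of G x] meet_leq1[of x y] by auto
qed

lemma ext_mem: "filt G \<Longrightarrow> y \<in> K \<Longrightarrow> y \<in> {z \<in> K. \<exists>g\<in>G. leq L (meet L g y) z}"
  using filt_top[of G] meet_leq2[of "top L" y] by auto

end

context whb begin

lemma sgoodD:
  assumes "sgood S"
  shows "\<And>x. x \<in> K \<Longrightarrow> S x x"
    and "\<And>x y z. x \<in> K \<Longrightarrow> y \<in> K \<Longrightarrow> z \<in> K \<Longrightarrow> S x y \<Longrightarrow> S y z \<Longrightarrow> S x z"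
    and "\<And>x y x' y'. x \<in> K \<Longrightarrow> y \<in> K \<Longrightarrow> x' \<in> K \<Longrightarrow> y' \<in> K \<Longrightarrow> S x y \<Longrightarrow> leq L x' x \<Longrightarrow> leq L y y' \<Longrightarrow> S x' y'"
    and "\<And>x1 y1 x2 y2. x1 \<in> K \<Longrightarrow> y1 \<in> K \<Longrightarrow> x2 \<in> K \<Longrightarrow> y2 \<in> K \<Longrightarrow> S x1 y1 \<Longrightarrow> S x2 y2 \<Longrightarrow> S (meet L x1 x2) (meet L y1 y2)"
    and "\<And>x1 y1 x2 y2. x1 \<in> K \<Longrightarrow> y1 \<in> K \<Longrightarrow> x2 \<in> K \<Longrightarrow> y2 \<in> K \<Longrightarrow> S x1 y1 \<Longrightarrow> S x2 y2 \<Longrightarrow> S (join L x1 x2) (join L y1 y2)"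
  using assms unfolding sgood_def by blast+

lemma prime_ext:
  assumes S: "sgood S" and F: "filt F" and I: "I \<subseteq> K" "I \<noteq> {}" "\<forall>x\<in>I. \<forall>y\<in>I. join L x y \<in> I"
    and sep: "\<forall>x\<in>F. \<forall>y\<in>I. \<not> S x y"
  shows "\<exists>P. prime P \<and> F \<subseteq> P \<and> P \<inter> I = {} \<and> (\<forall>x\<in>P. \<forall>y\<in>K. S x y \<longrightarrow> y \<in> P)"
proof -
  note SD = sgoodD[OF S]
  define \<G> where "\<G> = {G. filt G \<and> F \<subseteq> G \<and> (\<forall>x\<in>G. \<forall>y\<in>I. \<not> S x y)}"
  have "\<forall>C\<in>chains \<G>. \<exists>U\<in>\<G>. \<forall>X\<in>C. X \<subseteq> U"
  proof
    fix C assume C: "C \<in> chains \<G>"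
    show "\<exists>U\<in>\<G>. \<forall>X\<in>C. X \<subseteq> U"
    proof (cases "C = {}")
      case True then show ?thesis using F sep unfolding \<G>_def by blast
    next
      case False
      have CG: "C \<subseteq> \<G>" and ch: "\<forall>A\<in>C. \<forall>B\<in>C. A \<subseteq> B \<or> B \<subseteq> A"
        using C unfolding chains_def chain_subset_def by auto
      have "filt (\<Union>C)" unfolding filt_def
      proof (intro conjI ballI impI)
        show "\<Union>C \<subseteq> K" using CG unfolding \<G>_def filt_def by blast
        show "top L \<in> \<Union>C" using CG False unfolding \<G>_def filt_def by blast
      next
        fix x y assume "x \<in> \<Union>C" "y \<in> \<Union>C"
        then obtain A B where AB: "A \<in> C" "B \<in> C" "x \<in> A" "y \<in> B" by blast
        then have "(x \<in> A \<and> y \<in> A \<and> A \<in> C) \<or> (x \<in> B \<and> y \<in> B \<and> B \<in> C)" using ch by blast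
        then show "meet L x y \<in> \<Union>C" using CG unfolding \<G>_def filt_def by blast
      next
        fix x y assume "x \<in> \<Union>C" "y \<in> K" "leq L x y"
        then show "y \<in> \<Union>C" using CG unfolding \<G>_def filt_def by blast
      qed
      moreover have "F \<subseteq> \<Union>C" using CG False unfolding \<G>_def by blast
      moreover have "\<forall>x\<in>\<Union>C. \<forall>y\<in>I. \<not> S x y" using CG unfolding \<G>_def by blast
      ultimately show ?thesis unfolding \<G>_def by blast
    qed
  qed
  from Zorn_Lemma2[OF this] obtain M where M: "M \<in> \<G>" and max: "\<forall>X\<in>\<G>. M \<subseteq> X \<longrightarrow> X = M"
    by blast
  have Mf: "filt M" and FM: "F \<subseteq> M" and Msep: "\<forall>x\<in>M. \<forall>y\<in>I. \<not> S x y"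
    using M unfolding \<G>_def by auto
  have MK: "\<And>x. x \<in> M \<Longrightarrow> x \<in> K" using filt_sub[OF Mf] .
  have key: "\<exists>g\<in>M. \<exists>z\<in>I. S (meet L g y) z" if y: "y \<in> K" "y \<notin> M" for y
  proof (rule ccontr)
    assume nk: "\<not> ?thesis"
    let ?H = "{z \<in> K. \<exists>g\<in>M. leq L (meet L g y) z}"
    have Hf: "filt ?H" using ext_filt[OF Mf y(1)] .
    have "\<forall>x\<in>?H. \<forall>z\<in>I. \<not> S x z"
    proof (intro ballI notI)
      fix x z assume x: "x \<in> ?H" and z: "z \<in> I" and s: "S x z"
      then obtain g where g: "g \<in> M" "leq L (meet L g y) x" "x \<in> K" by blast
      have "S (meet L g y) z" using SD(3)[OF g(3) _ _ _ s g(2) leq_refl] g MK z I y by auto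
      then show False using nk g z by blast
    qed
    then have "?H \<in> \<G>" using Hf FM ext_sub[OF Mf y(1)] unfolding \<G>_def by blast
    then have "?H = M" using max ext_sub[OF Mf y(1)] by blast
    then show False using ext_mem[OF Mf y(1)] y by blast
  qed
  have closed: "\<forall>x\<in>M. \<forall>y\<in>K. S x y \<longrightarrow> y \<in> M"
  proof (intro ballI impI, rule ccontr)
    fix x y assume x: "x \<in> M" and y: "y \<in> K" and s: "S x y" and ny: "y \<notin> M"
    obtain g z where g: "g \<in> M" "z \<in> I" "S (meet L g y) z" using key[OF y ny] by blast
    have gK: "g \<in> K" "x \<in> K" "z \<in> K" using MK g x I by auto
    have "S (meet L g x) (meet L g y)" using SD(4)[OF gK(1) gK(1) gK(2) y SD(1)[OF gK(1)] s] .
    then have "S (meet L g x) z" using SD(2)[of "meet L g x" "meet L g y" z] g(3) gK y by simp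
    moreover have "meet L g x \<in> M" using filt_meet[OF Mf g(1) x] .
    ultimately show False using Msep g by blast
  qed
  have disj: "M \<inter> I = {}"
  proof -
    { fix x assume "x \<in> M" "x \<in> I"
      then have False using Msep SD(1) MK by blast }
    then show ?thesis by blast
  qed
  have bot: "bot L \<notin> M"
  proof
    assume b: "bot L \<in> M"
    obtain z where z: "z \<in> I" using I by blast
    have "S (bot L) z" using SD(3)[of z z "bot L" z] SD(1)[of z] z I bot_leq leq_refl by auto
    then show False using Msep b z by blast
  qed
  have primeM: "\<forall>x\<in>K. \<forall>y\<in>K. join L x y \<in> M \<longrightarrow> x \<in> M \<or> y \<in> M"
  proof (intro ballI impI, rule ccontr)
    fix x y assume x: "x \<in> K" and y: "y \<in> K" and j: "join L x y \<in> M" and n: "\<not> (x \<in> M \<or> y \<in> M)"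
    obtain g1 z1 where g1: "g1 \<in> M" "z1 \<in> I" "S (meet L g1 x) z1" using key[OF x] n by blast
    obtain g2 z2 where g2: "g2 \<in> M" "z2 \<in> I" "S (meet L g2 y) z2" using key[OF y] n by blast
    have gK: "g1 \<in> K" "g2 \<in> K" "z1 \<in> K" "z2 \<in> K" using MK g1 g2 I by auto
    define g where "g = meet L g1 g2"
    have gM: "g \<in> M" using filt_meet[OF Mf g1(1) g2(1)] g_def by simp
    have gk: "g \<in> K" using gK g_def by simp
    have s1: "S (meet L g x) z1"
      using SD(3)[OF _ gK(3) _ gK(3) g1(3) _ leq_refl[OF gK(3)], of "meet L g x"] gK x gk
        meet_mono[of g x g1 x] meet_leq1[of g1 g2] leq_refl[of x] g_def by simp
    have s2: "S (meet L g y) z2"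
      using SD(3)[OF _ gK(4) _ gK(4) g2(3) _ leq_refl[OF gK(4)], of "meet L g y"] gK y gk
        meet_mono[of g y g2 y] meet_leq2[of g1 g2] leq_refl[of y] g_def by simp
    have "S (join L (meet L g x) (meet L g y)) (join L z1 z2)"
      using SD(5)[OF _ gK(3) _ gK(4) s1 s2] gk x y by simp
    moreover have "join L (meet L g x) (meet L g y) = meet L g (join L x y)"
      using distrib[of g x y] gk x y by simp
    moreover have "meet L g (join L x y) \<in> M" using filt_meet[OF Mf gM j] .
    moreover have "join L z1 z2 \<in> I" using I g1 g2 by blast
    ultimately show False using Msep by metis
  qed
  have "prime M" unfolding prime_def using Mf bot primeM by blast
  then show ?thesis using FM disj closed by blast
qed

end

context whb begin

definition R :: "'a set \<Rightarrow> 'a set \<Rightarrow> bool" where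
  "R P P' \<longleftrightarrow> (\<forall>a\<in>K. \<forall>b\<in>K. imp L a b \<in> P \<longrightarrow> a \<in> P' \<longrightarrow> b \<in> P')"

lemma sgood_leq: "sgood (leq L)"
  unfolding sgood_def
proof (intro conjI ballI impI)
  fix x assume "x \<in> K" then show "leq L x x" by (rule leq_refl)
next
  fix x y z assume "x \<in> K" "y \<in> K" "z \<in> K" "leq L x y" "leq L y z"
  then show "leq L x z" by (rule leq_trans)
next
  fix x y x' y' assume h: "x \<in> K" "y \<in> K" "x' \<in> K" "y' \<in> K" "leq L x y" "leq L x' x" "leq L y y'"
  then have "leq L x' y" using leq_trans[of x' x y] by simp
  then show "leq L x' y'" using leq_trans[of x' y y'] h by simp
next
  fix x1 y1 x2 y2 assume "x1 \<in> K" "y1 \<in> K" "x2 \<in> K" "y2 \<in> K" "leq L x1 y1" "leq L x2 y2"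
  then show "leq L (meet L x1 x2) (meet L y1 y2)" using meet_mono[of x1 x2 y1 y2] by simp
next
  fix x1 y1 x2 y2 assume "x1 \<in> K" "y1 \<in> K" "x2 \<in> K" "y2 \<in> K" "leq L x1 y1" "leq L x2 y2"
  then show "leq L (join L x1 x2) (join L y1 y2)" using join_mono[of x1 x2 y1 y2] by simp
qed

lemma sgood_imp:
  assumes P: "prime P" shows "sgood (\<lambda>x y. imp L x y \<in> P)"
  unfolding sgood_def
proof (intro conjI ballI impI)
  fix x assume "x \<in> K" then show "imp L x x \<in> P" using imp_refl[of x x] prime_top[OF P] by simp
next
  fix x y z assume h: "x \<in> K" "y \<in> K" "z \<in> K" "imp L x y \<in> P" "imp L y z \<in> P"
  then have "meet L (imp L x y) (imp L y z) \<in> P" using prime_meet[OF P] by simp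
  then show "imp L x z \<in> P" using prime_up[OF P _ _ imp_trans[of x y z]] h by simp
next
  fix x y x' y' assume h: "x \<in> K" "y \<in> K" "x' \<in> K" "y' \<in> K" "imp L x y \<in> P" "leq L x' x" "leq L y y'"
  then show "imp L x' y' \<in> P" using prime_up[OF P h(5) _ imp_mono2[of x y x' y']] by simp
next
  fix x1 y1 x2 y2 assume h: "x1 \<in> K" "y1 \<in> K" "x2 \<in> K" "y2 \<in> K" "imp L x1 y1 \<in> P" "imp L x2 y2 \<in> P"
  let ?m = "meet L x1 x2"
  have mk: "?m \<in> K" using h by simp
  have e: "imp L ?m (meet L y1 y2) = meet L (imp L ?m y1) (imp L ?m y2)" using imp_meet[OF mk h(2) h(4)] .
  have 1: "imp L ?m y1 \<in> P" using prime_up[OF P h(5) _ imp_anti[of x1 ?m y1]] meet_leq1[of x1 x2] h by simp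
  have 2: "imp L ?m y2 \<in> P" using prime_up[OF P h(6) _ imp_anti[of x2 ?m y2]] meet_leq2[of x1 x2] h by simp
  show "imp L ?m (meet L y1 y2) \<in> P" using e 1 2 prime_meet[OF P] h by simp
next
  fix x1 y1 x2 y2 assume h: "x1 \<in> K" "y1 \<in> K" "x2 \<in> K" "y2 \<in> K" "imp L x1 y1 \<in> P" "imp L x2 y2 \<in> P"
  let ?j = "join L y1 y2"
  have jk: "?j \<in> K" using h by simp
  have e: "imp L (join L x1 x2) ?j = meet L (imp L x1 ?j) (imp L x2 ?j)" using imp_join[OF h(1) h(3) jk] .
  have 1: "imp L x1 ?j \<in> P" using prime_up[OF P h(5) _ imp_mono[of x1 y1 ?j]] join_leq1[of y1 y2] h by simp
  have 2: "imp L x2 ?j \<in> P" using prime_up[OF P h(6) _ imp_mono[of x2 y2 ?j]] join_leq2[of y1 y2] h by simp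
  show "imp L (join L x1 x2) ?j \<in> P" using e 1 2 prime_meet[OF P] h by simp
qed

lemma sgood_coimp:
  assumes P: "prime P" shows "sgood (\<lambda>x y. coimp L x y \<notin> P)"
  unfolding sgood_def
proof (intro conjI ballI impI)
  fix x assume "x \<in> K" then show "coimp L x x \<notin> P" using coimp_refl[of x x] prime_bot[OF P] by simp
next
  fix x y z assume h: "x \<in> K" "y \<in> K" "z \<in> K" "coimp L x y \<notin> P" "coimp L y z \<notin> P"
  show "coimp L x z \<notin> P"
  proof
    assume "coimp L x z \<in> P"
    then have "join L (coimp L x y) (coimp L y z) \<in> P" using prime_up[OF P _ _ coimp_trans[of x y z]] h by simp
    then show False using prime_join[OF P] h by simp
  qed
next
  fix x y x' y' assume h: "x \<in> K" "y \<in> K" "x' \<in> K" "y' \<in> K" "coimp L x y \<notin> P" "leq L x' x" "leq L y y'"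
  show "coimp L x' y' \<notin> P"
  proof
    assume "coimp L x' y' \<in> P"
    then show False using prime_up[OF P _ _ coimp_mono2[of x' y' x y]] h by simp
  qed
next
  fix x1 y1 x2 y2 assume h: "x1 \<in> K" "y1 \<in> K" "x2 \<in> K" "y2 \<in> K" "coimp L x1 y1 \<notin> P" "coimp L x2 y2 \<notin> P"
  let ?m = "meet L x1 x2"
  have mk: "?m \<in> K" using h by simp
  have e: "coimp L ?m (meet L y1 y2) = join L (coimp L ?m y1) (coimp L ?m y2)" using coimp_meet[OF mk h(2) h(4)] .
  have 1: "coimp L ?m y1 \<notin> P"
  proof
    assume "coimp L ?m y1 \<in> P"
    then show False using prime_up[OF P _ _ coimp_mono[of ?m x1 y1]] meet_leq1[of x1 x2] h by simp
  qed
  have 2: "coimp L ?m y2 \<notin> P"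
  proof
    assume "coimp L ?m y2 \<in> P"
    then show False using prime_up[OF P _ _ coimp_mono[of ?m x2 y2]] meet_leq2[of x1 x2] h by simp
  qed
  show "coimp L ?m (meet L y1 y2) \<notin> P" using e 1 2 prime_join[OF P] h by simp
next
  fix x1 y1 x2 y2 assume h: "x1 \<in> K" "y1 \<in> K" "x2 \<in> K" "y2 \<in> K" "coimp L x1 y1 \<notin> P" "coimp L x2 y2 \<notin> P"
  let ?j = "join L y1 y2"
  have jk: "?j \<in> K" using h by simp
  have e: "coimp L (join L x1 x2) ?j = join L (coimp L x1 ?j) (coimp L x2 ?j)" using coimp_join[OF h(1) h(3) jk] .
  have 1: "coimp L x1 ?j \<notin> P"
  proof
    assume "coimp L x1 ?j \<in> P"
    then show False using prime_up[OF P _ _ coimp_anti[of x1 ?j y1]] join_leq1[of y1 y2] h by simp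
  qed
  have 2: "coimp L x2 ?j \<notin> P"
  proof
    assume "coimp L x2 ?j \<in> P"
    then show False using prime_up[OF P _ _ coimp_anti[of x2 ?j y2]] join_leq2[of y1 y2] h by simp
  qed
  show "coimp L (join L x1 x2) ?j \<notin> P" using e 1 2 prime_join[OF P] h by simp
qed

lemma down_ideal:
  assumes b: "b \<in> K"
  shows "{y \<in> K. leq L y b} \<subseteq> K" "{y \<in> K. leq L y b} \<noteq> {}"
    "\<forall>x\<in>{y \<in> K. leq L y b}. \<forall>y\<in>{y \<in> K. leq L y b}. join L x y \<in> {y \<in> K. leq L y b}"
  using b leq_refl[OF b] join_leqI[of _ _ b] by auto

lemma rep_imp:
  assumes P: "prime P" and ab: "a \<in> K" "b \<in> K"
  shows "imp L a b \<in> P \<longleftrightarrow> (\<forall>P'. prime P' \<longrightarrow> R P P' \<longrightarrow> a \<in> P' \<longrightarrow> b \<in> P')"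
proof
  assume "imp L a b \<in> P" then show "\<forall>P'. prime P' \<longrightarrow> R P P' \<longrightarrow> a \<in> P' \<longrightarrow> b \<in> P'"
    unfolding R_def using ab by blast
next
  assume r: "\<forall>P'. prime P' \<longrightarrow> R P P' \<longrightarrow> a \<in> P' \<longrightarrow> b \<in> P'"
  show "imp L a b \<in> P"
  proof (rule ccontr)
    assume n: "imp L a b \<notin> P"
    have sep: "\<forall>x\<in>{x \<in> K. leq L a x}. \<forall>y\<in>{y \<in> K. leq L y b}. \<not> imp L x y \<in> P"
    proof (intro ballI notI)
      fix x y assume x: "x \<in> {x \<in> K. leq L a x}" and y: "y \<in> {y \<in> K. leq L y b}" and i: "imp L x y \<in> P"
      then show False using prime_up[OF P i _ imp_mono2[of x y a b]] ab n by simp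
    qed
    obtain P' where P': "prime P'" "{x \<in> K. leq L a x} \<subseteq> P'" "P' \<inter> {y \<in> K. leq L y b} = {}"
      "\<forall>x\<in>P'. \<forall>y\<in>K. imp L x y \<in> P \<longrightarrow> y \<in> P'"
      using prime_ext[OF sgood_imp[OF P] up_filt[OF ab(1)] down_ideal[OF ab(2)] sep] by blast
    have "a \<in> P'" using P'(2) ab leq_refl[of a] by blast
    moreover have "b \<notin> P'" using P'(3) ab leq_refl[of b] by blast
    moreover have "R P P'" unfolding R_def using P'(4) by blast
    ultimately show False using r P'(1) by blast
  qed
qed

lemma coimp_of_R:
  assumes P: "prime P" and P': "prime P'" and r: "R P' P" and a: "a \<in> P'" and b: "b \<in> K" "b \<notin> P'"
  shows "coimp L a b \<in> P"
proof -
  have ak: "a \<in> K" using prime_sub[OF P' a] .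
  have "join L b (imp L (top L) (coimp L a b)) \<in> P'" using prime_up[OF P' a _ ax10[OF ak b(1)]] ak b by simp
  then have "imp L (top L) (coimp L a b) \<in> P'" using prime_join[OF P'] b ak by simp
  then show ?thesis using r[unfolded R_def, rule_format, OF top_in coimp_in[OF ak b(1)]] prime_top[OF P] by blast
qed

lemma R_of_co:
  assumes P: "prime P" and P': "prime P'" and c: "\<forall>x\<in>P'. \<forall>y\<in>K. coimp L x y \<notin> P \<longrightarrow> y \<in> P'"
  shows "R P' P"
  unfolding R_def
proof (intro ballI impI)
  fix c d assume cd: "c \<in> K" "d \<in> K" and i: "imp L c d \<in> P'" and cP: "c \<in> P"
  have "coimp L (imp L c d) (bot L) \<in> P" using c[rule_format, OF i bot_in] prime_bot[OF P'] by blast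
  then have "meet L c (coimp L (imp L c d) (bot L)) \<in> P" using prime_meet[OF P] cP cd by simp
  then show "d \<in> P" using prime_up[OF P _ _ ax9[OF cd]] cd by simp
qed

lemma rep_coimp:
  assumes P: "prime P" and ab: "a \<in> K" "b \<in> K"
  shows "coimp L a b \<in> P \<longleftrightarrow> (\<exists>P'. prime P' \<and> R P' P \<and> a \<in> P' \<and> b \<notin> P')"
proof
  assume "\<exists>P'. prime P' \<and> R P' P \<and> a \<in> P' \<and> b \<notin> P'"
  then show "coimp L a b \<in> P" using coimp_of_R[OF P] ab by blast
next
  assume ci: "coimp L a b \<in> P"
  have sep: "\<forall>x\<in>{x \<in> K. leq L a x}. \<forall>y\<in>{y \<in> K. leq L y b}. \<not> coimp L x y \<notin> P"
  proof (intro ballI notI)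
    fix x y assume x: "x \<in> {x \<in> K. leq L a x}" and y: "y \<in> {y \<in> K. leq L y b}" and i: "coimp L x y \<notin> P"
    then show False using prime_up[OF P ci _ coimp_mono2[of a b x y]] ab by simp
  qed
  obtain P' where P': "prime P'" "{x \<in> K. leq L a x} \<subseteq> P'" "P' \<inter> {y \<in> K. leq L y b} = {}"
    "\<forall>x\<in>P'. \<forall>y\<in>K. coimp L x y \<notin> P \<longrightarrow> y \<in> P'"
    using prime_ext[OF sgood_coimp[OF P] up_filt[OF ab(1)] down_ideal[OF ab(2)] sep] by blast
  have "a \<in> P'" using P'(2) ab leq_refl[of a] by blast
  moreover have "b \<notin> P'" using P'(3) ab leq_refl[of b] by blast
  moreover have "R P' P" using R_of_co[OF P P'(1) P'(4)] .
  ultimately show "\<exists>P'. prime P' \<and> R P' P \<and> a \<in> P' \<and> b \<notin> P'" using P'(1) by blast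
qed

lemma sep_prime:
  assumes ab: "a \<in> K" "b \<in> K" and n: "\<not> leq L a b"
  shows "\<exists>P. prime P \<and> a \<in> P \<and> b \<notin> P"
proof -
  have sep: "\<forall>x\<in>{x \<in> K. leq L a x}. \<forall>y\<in>{y \<in> K. leq L y b}. \<not> leq L x y"
  proof (intro ballI notI)
    fix x y assume x: "x \<in> {x \<in> K. leq L a x}" and y: "y \<in> {y \<in> K. leq L y b}" and i: "leq L x y"
    then have "leq L a y" using leq_trans[of a x y] ab by simp
    then show False using leq_trans[of a y b] ab y n by simp
  qed
  obtain P' where P': "prime P'" "{x \<in> K. leq L a x} \<subseteq> P'" "P' \<inter> {y \<in> K. leq L y b} = {}"
    using prime_ext[OF sgood_leq up_filt[OF ab(1)] down_ideal[OF ab(2)] sep] by blast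
  have "a \<in> P'" using P'(2) ab leq_refl[of a] by blast
  moreover have "b \<notin> P'" using P'(3) ab leq_refl[of b] by blast
  ultimately show ?thesis using P'(1) by blast
qed

end

locale wemb = A: whb A + B: whb B
  for A :: "('a, 'm) whb_alg_scheme" and B :: "('b, 'n) whb_alg_scheme" +
  fixes i :: "'a \<Rightarrow> 'b"
  assumes emb: "whb_emb A B i"
begin

definition f :: "'b set \<Rightarrow> 'a set" where "f P = {a \<in> carrier A. i a \<in> P}"

lemma i_in[simp]: "a \<in> carrier A \<Longrightarrow> i a \<in> carrier B" using emb unfolding whb_emb_def whb_hom_def by blast
lemma i_bot: "i (bot A) = bot B" using emb unfolding whb_emb_def whb_hom_def by blast
lemma i_top: "i (top A) = top B" using emb unfolding whb_emb_def whb_hom_def by blast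
lemma i_meet: "a \<in> carrier A \<Longrightarrow> b \<in> carrier A \<Longrightarrow> i (meet A a b) = meet B (i a) (i b)" using emb unfolding whb_emb_def whb_hom_def by blast
lemma i_join: "a \<in> carrier A \<Longrightarrow> b \<in> carrier A \<Longrightarrow> i (join A a b) = join B (i a) (i b)" using emb unfolding whb_emb_def whb_hom_def by blast
lemma i_imp: "a \<in> carrier A \<Longrightarrow> b \<in> carrier A \<Longrightarrow> i (imp A a b) = imp B (i a) (i b)" using emb unfolding whb_emb_def whb_hom_def by blast
lemma i_coimp: "a \<in> carrier A \<Longrightarrow> b \<in> carrier A \<Longrightarrow> i (coimp A a b) = coimp B (i a) (i b)" using emb unfolding whb_emb_def whb_hom_def by blast
lemma i_inj: "inj_on i (carrier A)" using emb unfolding whb_emb_def by blast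

lemma i_leq: "a \<in> carrier A \<Longrightarrow> b \<in> carrier A \<Longrightarrow> leq B (i a) (i b) \<longleftrightarrow> leq A a b"
  unfolding leq_def using i_meet[of a b] inj_onD[OF i_inj, of "meet A a b" a] by auto

lemma f_prime:
  assumes P: "B.prime P" shows "A.prime (f P)"
  unfolding A.prime_def A.filt_def
proof (intro conjI ballI impI)
  show "f P \<subseteq> carrier A" unfolding f_def by blast
  show "top A \<in> f P" unfolding f_def using i_top B.prime_top[OF P] by simp
  show "bot A \<notin> f P" unfolding f_def using i_bot B.prime_bot[OF P] by simp
next
  fix x y assume "x \<in> f P" "y \<in> f P"
  then show "meet A x y \<in> f P" unfolding f_def using i_meet[of x y] B.prime_meet[OF P] by simp
next
  fix x y assume "x \<in> f P" "y \<in> carrier A" "leq A x y"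
  then show "y \<in> f P" unfolding f_def using i_leq[of x y] B.prime_up[OF P, of "i x" "i y"] by simp
next
  fix x y assume "x \<in> carrier A" "y \<in> carrier A" "join A x y \<in> f P"
  then show "x \<in> f P \<or> y \<in> f P" unfolding f_def using i_join[of x y] B.prime_join[OF P] by simp
qed

lemma lift:
  assumes S: "B.sgood S" and F: "A.prime F"
    and sep: "\<forall>a\<in>F. \<forall>e\<in>carrier A - F. \<forall>x\<in>carrier B. \<forall>y\<in>carrier B.
               leq B (i a) x \<longrightarrow> leq B y (i e) \<longrightarrow> \<not> S x y"
  shows "\<exists>P'. B.prime P' \<and> f P' = F \<and> (\<forall>x\<in>P'. \<forall>y\<in>carrier B. S x y \<longrightarrow> y \<in> P')"
proof -
  define F' where "F' = {x \<in> carrier B. \<exists>a\<in>F. leq B (i a) x}"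
  define I' where "I' = {y \<in> carrier B. \<exists>e\<in>carrier A - F. leq B y (i e)}"
  have FA: "\<And>a. a \<in> F \<Longrightarrow> a \<in> carrier A" using A.prime_sub[OF F] .
  have F'f: "B.filt F'" unfolding B.filt_def
  proof (intro conjI ballI impI)
    show "F' \<subseteq> carrier B" unfolding F'_def by blast
    show "top B \<in> F'" unfolding F'_def using A.prime_top[OF F] i_top B.leq_refl[of "top B"] by force
  next
    fix x y assume "x \<in> F'" "y \<in> F'"
    then obtain a1 a2 where h: "a1 \<in> F" "a2 \<in> F" "x \<in> carrier B" "y \<in> carrier B" "leq B (i a1) x" "leq B (i a2) y"
      unfolding F'_def by blast
    have k: "a1 \<in> carrier A" "a2 \<in> carrier A" using FA h by auto
    have "leq B (i (meet A a1 a2)) (meet B x y)" using i_meet[OF k] B.meet_mono[of "i a1" "i a2" x y] h k by simp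
    moreover have "meet A a1 a2 \<in> F" using A.prime_meet[OF F k] h by simp
    ultimately show "meet B x y \<in> F'" unfolding F'_def using h by auto
  next
    fix x y assume "x \<in> F'" "y \<in> carrier B" "leq B x y"
    then show "y \<in> F'" unfolding F'_def using B.leq_trans FA i_in by blast
  qed
  have I'1: "I' \<subseteq> carrier B" unfolding I'_def by blast
  have I'2: "I' \<noteq> {}"
  proof -
    have "bot A \<in> carrier A - F" using A.prime_bot[OF F] by simp
    then have "i (bot A) \<in> I'" unfolding I'_def using B.leq_refl[of "i (bot A)"] by auto
    then show ?thesis by blast
  qed
  have I'3: "\<forall>x\<in>I'. \<forall>y\<in>I'. join B x y \<in> I'"
  proof (intro ballI)
    fix x y assume "x \<in> I'" "y \<in> I'"
    then obtain e1 e2 where h: "e1 \<in> carrier A - F" "e2 \<in> carrier A - F" "x \<in> carrier B" "y \<in> carrier B" "leq B x (i e1)" "leq B y (i e2)"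
      unfolding I'_def by blast
    have "leq B (join B x y) (i (join A e1 e2))" using i_join[of e1 e2] B.join_mono[of x y "i e1" "i e2"] h by simp
    moreover have "join A e1 e2 \<in> carrier A - F" using A.prime_join[OF F, of e1 e2] h by simp
    ultimately show "join B x y \<in> I'" unfolding I'_def using h by auto
  qed
  have sep': "\<forall>x\<in>F'. \<forall>y\<in>I'. \<not> S x y"
    using sep unfolding F'_def I'_def by blast
  obtain P' where P': "B.prime P'" "F' \<subseteq> P'" "P' \<inter> I' = {}" "\<forall>x\<in>P'. \<forall>y\<in>carrier B. S x y \<longrightarrow> y \<in> P'"
    using B.prime_ext[OF S F'f I'1 I'2 I'3 sep'] by blast
  have "f P' = F"
  proof
    show "f P' \<subseteq> F"
    proof
      fix a assume a: "a \<in> f P'"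
      show "a \<in> F"
      proof (rule ccontr)
        assume "a \<notin> F"
        then have "i a \<in> I'" using a unfolding f_def I'_def using B.leq_refl[of "i a"] by auto
        then show False using a P'(3) unfolding f_def by blast
      qed
    qed
  next
    show "F \<subseteq> f P'"
    proof
      fix a assume a: "a \<in> F"
      then have "i a \<in> F'" unfolding F'_def using FA[OF a] B.leq_refl[of "i a"] by auto
      then show "a \<in> f P'" unfolding f_def using P'(2) FA[OF a] by blast
    qed
  qed
  then show ?thesis using P' by blast
qed

lemma surj:
  assumes F: "A.prime F" shows "\<exists>P. B.prime P \<and> f P = F"
proof -
  have "\<forall>a\<in>F. \<forall>e\<in>carrier A - F. \<forall>x\<in>carrier B. \<forall>y\<in>carrier B.
               leq B (i a) x \<longrightarrow> leq B y (i e) \<longrightarrow> \<not> leq B x y"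
  proof (intro ballI impI notI)
    fix a e x y assume h: "a \<in> F" "e \<in> carrier A - F" "x \<in> carrier B" "y \<in> carrier B"
      "leq B (i a) x" "leq B y (i e)" "leq B x y"
    have ak: "a \<in> carrier A" using A.prime_sub[OF F h(1)] .
    have "leq B (i a) y" using B.leq_trans[of "i a" x y] h ak by simp
    then have "leq B (i a) (i e)" using B.leq_trans[of "i a" y "i e"] h ak by simp
    then have ae: "leq A a e" using i_leq[of a e] ak h by simp
    show False using A.prime_up[OF F h(1) _ ae] h by blast
  qed
  then show ?thesis using lift[OF B.sgood_leq F] by blast
qed

lemma fwd:
  assumes "B.R P P'" shows "A.R (f P) (f P')"
  unfolding A.R_def
proof (intro ballI impI)
  fix a b assume ab: "a \<in> carrier A" "b \<in> carrier A" and "imp A a b \<in> f P" "a \<in> f P'"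
  then show "b \<in> f P'" using assms[unfolded B.R_def, rule_format, OF i_in[OF ab(1)] i_in[OF ab(2)]] i_imp[OF ab] ab unfolding f_def by simp
qed

lemma backR:
  assumes P: "B.prime P" and F: "A.prime F" and r: "A.R (f P) F"
  shows "\<exists>P'. B.prime P' \<and> B.R P P' \<and> f P' = F"
proof -
  have "\<forall>a\<in>F. \<forall>e\<in>carrier A - F. \<forall>x\<in>carrier B. \<forall>y\<in>carrier B.
               leq B (i a) x \<longrightarrow> leq B y (i e) \<longrightarrow> \<not> imp B x y \<in> P"
  proof (intro ballI impI notI)
    fix a e x y assume h: "a \<in> F" "e \<in> carrier A - F" "x \<in> carrier B" "y \<in> carrier B"
      "leq B (i a) x" "leq B y (i e)" "imp B x y \<in> P"
    have ak: "a \<in> carrier A" using A.prime_sub[OF F h(1)] .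
    have "imp B (i a) (i e) \<in> P" using B.prime_up[OF P h(7) _ B.imp_mono2[of x y "i a" "i e"]] h ak by simp
    then have "imp A a e \<in> f P" unfolding f_def using i_imp[of a e] ak h by simp
    then show False using r unfolding A.R_def using ak h by blast
  qed
  from lift[OF B.sgood_imp[OF P] F this] obtain P' where
    P': "B.prime P'" "f P' = F" "\<forall>x\<in>P'. \<forall>y\<in>carrier B. imp B x y \<in> P \<longrightarrow> y \<in> P'" by blast
  have "B.R P P'" unfolding B.R_def using P'(3) by blast
  then show ?thesis using P' by blast
qed

lemma backRinv:
  assumes P: "B.prime P" and F: "A.prime F" and r: "A.R F (f P)"
  shows "\<exists>P'. B.prime P' \<and> B.R P' P \<and> f P' = F"
proof -
  have "\<forall>a\<in>F. \<forall>e\<in>carrier A - F. \<forall>x\<in>carrier B. \<forall>y\<in>carrier B.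
               leq B (i a) x \<longrightarrow> leq B y (i e) \<longrightarrow> \<not> coimp B x y \<notin> P"
  proof (intro ballI impI notI)
    fix a e x y assume h: "a \<in> F" "e \<in> carrier A - F" "x \<in> carrier B" "y \<in> carrier B"
      "leq B (i a) x" "leq B y (i e)" "coimp B x y \<notin> P"
    have ak: "a \<in> carrier A" using A.prime_sub[OF F h(1)] .
    have "coimp A a e \<in> f P" using A.coimp_of_R[OF f_prime[OF P] F r h(1)] h by simp
    then have "coimp B (i a) (i e) \<in> P" unfolding f_def using i_coimp[of a e] ak h by simp
    then have "coimp B x y \<in> P" using B.prime_up[OF P _ _ B.coimp_mono2[of "i a" "i e" x y]] h ak by simp
    then show False using h by simp
  qed
  from lift[OF B.sgood_coimp[OF P] F this] obtain P' where
    P': "B.prime P'" "f P' = F" "\<forall>x\<in>P'. \<forall>y\<in>carrier B. coimp B x y \<notin> P \<longrightarrow> y \<in> P'" by blast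
  have "B.R P' P" using B.R_of_co[OF P P'(1) P'(3)] .
  then show ?thesis using P' by blast
qed

end

locale setalg =
  fixes Z :: "'z set" and RR :: "'z \<Rightarrow> 'z \<Rightarrow> bool"
    and g1 :: "'b \<Rightarrow> 'z set" and g2 :: "'c \<Rightarrow> 'z set"
  assumes g1Z: "\<And>b. g1 b \<subseteq> Z" and g2Z: "\<And>c. g2 c \<subseteq> Z"
begin

definition zimp :: "'z set \<Rightarrow> 'z set \<Rightarrow> 'z set" where
  "zimp U V = {z \<in> Z. \<forall>z'\<in>Z. RR z z' \<longrightarrow> z' \<in> U \<longrightarrow> z' \<in> V}"

definition zco :: "'z set \<Rightarrow> 'z set \<Rightarrow> 'z set" where
  "zco U V = {z \<in> Z. \<exists>z'\<in>Z. RR z' z \<and> z' \<in> U \<and> z' \<notin> V}"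

inductive_set gS :: "'z set set" where
  gen1: "g1 b \<in> gS"
| gen2: "g2 c \<in> gS"
| gbot: "{} \<in> gS"
| gtop: "Z \<in> gS"
| gmeet: "U \<in> gS \<Longrightarrow> V \<in> gS \<Longrightarrow> U \<inter> V \<in> gS"
| gjoin: "U \<in> gS \<Longrightarrow> V \<in> gS \<Longrightarrow> U \<union> V \<in> gS"
| gimp: "U \<in> gS \<Longrightarrow> V \<in> gS \<Longrightarrow> zimp U V \<in> gS"
| gco: "U \<in> gS \<Longrightarrow> V \<in> gS \<Longrightarrow> zco U V \<in> gS"

lemma gS_sub: "U \<in> gS \<Longrightarrow> U \<subseteq> Z"
  by (induction rule: gS.induct) (use g1Z g2Z in \<open>auto simp: zimp_def zco_def\<close>)

definition opn :: "nat \<Rightarrow> 'z set \<Rightarrow> 'z set \<Rightarrow> 'z set" where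
  "opn n u v = (if n = 0 then u \<inter> v else if n = 1 then u \<union> v else if n = 2 then zimp u v else zco u v)"

definition step :: "'z set list \<Rightarrow> ('b + 'c) + nat \<Rightarrow> 'z set list" where
  "step st s = (case s of Inl (Inl b) \<Rightarrow> g1 b # st | Inl (Inr c) \<Rightarrow> g2 c # st
     | Inr n \<Rightarrow> (if n = 4 then {} # st else if n = 5 then Z # st else
         (case st of v # u # r \<Rightarrow> opn n u v # r | _ \<Rightarrow> st)))"

definition run :: "(('b + 'c) + nat) list \<Rightarrow> 'z set list \<Rightarrow> 'z set list" where
  "run xs st = foldl step st xs"

definition ev :: "(('b + 'c) + nat) list \<Rightarrow> 'z set" where
  "ev xs = (case run xs [] of [] \<Rightarrow> {} | u # _ \<Rightarrow> u)"

definition rep :: "'z set \<Rightarrow> (('b + 'c) + nat) list" where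
  "rep U = (SOME xs. ev xs = U)"

lemma run_app: "run (xs @ ys) st = run ys (run xs st)" unfolding run_def by simp

lemma run_bin:
  assumes "\<forall>st. run xs st = U # st" "\<forall>st. run ys st = V # st" "n \<le> 3"
  shows "\<forall>st. run (xs @ ys @ [Inr n]) st = opn n U V # st"
  using assms by (simp add: run_app, simp add: run_def step_def)

lemma enc: "U \<in> gS \<Longrightarrow> \<exists>xs. \<forall>st. run xs st = U # st"
proof (induction rule: gS.induct)
  case (gen1 b) show ?case by (rule exI[of _ "[Inl (Inl b)]"]) (simp add: run_def step_def)
next
  case (gen2 c) show ?case by (rule exI[of _ "[Inl (Inr c)]"]) (simp add: run_def step_def)
next
  case gbot show ?case by (rule exI[of _ "[Inr 4]"]) (simp add: run_def step_def)
next
  case gtop show ?case by (rule exI[of _ "[Inr 5]"]) (simp add: run_def step_def)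
next
  case (gmeet U V)
  then obtain xs ys where "\<forall>st. run xs st = U # st" "\<forall>st. run ys st = V # st" by blast
  from run_bin[OF this, of 0] show ?case by (auto simp: opn_def)
next
  case (gjoin U V)
  then obtain xs ys where "\<forall>st. run xs st = U # st" "\<forall>st. run ys st = V # st" by blast
  from run_bin[OF this, of 1] show ?case by (auto simp: opn_def)
next
  case (gimp U V)
  then obtain xs ys where "\<forall>st. run xs st = U # st" "\<forall>st. run ys st = V # st" by blast
  from run_bin[OF this, of 2] show ?case by (auto simp: opn_def)
next
  case (gco U V)
  then obtain xs ys where "\<forall>st. run xs st = U # st" "\<forall>st. run ys st = V # st" by blast
  from run_bin[OF this, of 3] show ?case by (auto simp: opn_def)
qed

lemma ev_rep[simp]: "U \<in> gS \<Longrightarrow> ev (rep U) = U"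
proof -
  assume "U \<in> gS"
  then obtain xs where "\<forall>st. run xs st = U # st" using enc by blast
  then have "ev xs = U" unfolding ev_def by simp
  then show ?thesis unfolding rep_def by (rule someI)
qed

lemma rep_eq_iff[simp]: "U \<in> gS \<Longrightarrow> V \<in> gS \<Longrightarrow> rep U = rep V \<longleftrightarrow> U = V"
  by (metis ev_rep)

definition D :: "(('b + 'c) + nat) list whb_alg" where
  "D = \<lparr>carrier = rep ` gS, meet = \<lambda>x y. rep (ev x \<inter> ev y), join = \<lambda>x y. rep (ev x \<union> ev y),
        imp = \<lambda>x y. rep (zimp (ev x) (ev y)), coimp = \<lambda>x y. rep (zco (ev x) (ev y)),
        bot = rep {}, top = rep Z\<rparr>"

lemma D_simps[simp]: "carrier D = rep ` gS" "meet D x y = rep (ev x \<inter> ev y)" "join D x y = rep (ev x \<union> ev y)"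
  "imp D x y = rep (zimp (ev x) (ev y))" "coimp D x y = rep (zco (ev x) (ev y))"
  "bot D = rep {}" "top D = rep Z"
  unfolding D_def by simp_all

lemma ball_rep[simp]: "(\<forall>x\<in>rep ` gS. P x) \<longleftrightarrow> (\<forall>U\<in>gS. P (rep U))" by blast

lemma leq_rep[simp]: "U \<in> gS \<Longrightarrow> V \<in> gS \<Longrightarrow> leq D (rep U) (rep V) \<longleftrightarrow> U \<subseteq> V"
  unfolding leq_def using gS.gmeet[of U V] by auto

lemma zimp_refl: "zimp U U = Z" unfolding zimp_def by blast
lemma zimp_meet: "zimp U (V \<inter> W) = zimp U V \<inter> zimp U W" unfolding zimp_def by blast
lemma zimp_join: "zimp (U \<union> V) W = zimp U W \<inter> zimp V W" unfolding zimp_def by blast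
lemma zimp_trans: "zimp U V \<inter> zimp V W \<subseteq> zimp U W" unfolding zimp_def by blast
lemma zco_refl: "zco U U = {}" unfolding zco_def by blast
lemma zco_join: "zco (U \<union> V) W = zco U W \<union> zco V W" unfolding zco_def by blast
lemma zco_meet: "zco U (V \<inter> W) = zco U V \<union> zco U W" unfolding zco_def by blast
lemma zco_trans: "zco U W \<subseteq> zco U V \<union> zco V W" unfolding zco_def by blast
lemma z_ax9: "U \<inter> zco (zimp U V) {} \<subseteq> V" unfolding zco_def zimp_def by blast
lemma z_ax10: "U \<subseteq> Z \<Longrightarrow> U \<subseteq> V \<union> zimp Z (zco U V)" unfolding zco_def zimp_def by blast

lemma D_alg: "whb_algebra D"
  unfolding whb_algebra_def
  using gS_sub
  by (simp add: gS.intros Int_ac Un_ac Int_Un_distrib zimp_refl zimp_meet zimp_join zimp_trans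
      zco_refl zco_join zco_meet zco_trans z_ax9 z_ax10 Un_absorb1 Int_absorb2 Int_absorb1 Un_absorb2)

lemma hom:
  assumes gin: "\<And>b. g b \<in> gS" and gb: "g (bot B0) = {}" and gt: "g (top B0) = Z"
    and ops: "\<forall>a\<in>carrier B0. \<forall>b\<in>carrier B0. g (meet B0 a b) = g a \<inter> g b \<and> g (join B0 a b) = g a \<union> g b
       \<and> g (imp B0 a b) = zimp (g a) (g b) \<and> g (coimp B0 a b) = zco (g a) (g b)"
    and inj: "inj_on g (carrier B0)"
  shows "whb_emb B0 D (\<lambda>b. rep (g b))"
  unfolding whb_emb_def whb_hom_def
proof (intro conjI)
  show "inj_on (\<lambda>b. rep (g b)) (carrier B0)"
    using inj gin unfolding inj_on_def by simp
qed (use gin gb gt ops in \<open>simp_all add: gS.intros\<close>)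

end

theorem corollary6p26:
  fixes A :: "'a whb_alg" and B :: "'b whb_alg" and C :: "'c whb_alg"
    and i :: "'a \<Rightarrow> 'b" and j :: "'a \<Rightarrow> 'c"
  assumes "whb_algebra A" and "whb_algebra B" and "whb_algebra C"
    and "whb_emb A B i" and "whb_emb A C j"
  shows "\<exists>(D :: ((('b + 'c) + nat) list) whb_alg) h k.
           whb_algebra D \<and> whb_emb B D h \<and> whb_emb C D k \<and>
           (\<forall>a\<in>carrier A. h (i a) = k (j a))"
proof -
  interpret AB: wemb A B i by unfold_locales (simp_all add: assms)
  interpret AC: wemb A C j by unfold_locales (simp_all add: assms)
  define Z where "Z = {(P, Q). AB.B.prime P \<and> AC.B.prime Q \<and> AB.f P = AC.f Q}"
  define RZ where "RZ = (\<lambda>z z'. AB.B.R (fst z) (fst z') \<and> AC.B.R (snd z) (snd z'))"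
  define hB where "hB = (\<lambda>b. {z \<in> Z. b \<in> fst z})"
  define hC where "hC = (\<lambda>c. {z \<in> Z. c \<in> snd z})"
  interpret SA: setalg Z RZ hB hC by unfold_locales (auto simp: hB_def hC_def)
  have inZ: "(P, Q) \<in> Z \<longleftrightarrow> AB.B.prime P \<and> AC.B.prime Q \<and> AB.f P = AC.f Q" for P Q
    unfolding Z_def by simp
  have hB_imp: "hB (imp B a b) = SA.zimp (hB a) (hB b)" if ab: "a \<in> carrier B" "b \<in> carrier B" for a b
  proof (rule set_eqI, rule iffI)
    fix z assume "z \<in> hB (imp B a b)"
    then obtain P Q where z: "z = (P, Q)" "(P, Q) \<in> Z" "imp B a b \<in> P" unfolding hB_def by (cases z) auto
    show "z \<in> SA.zimp (hB a) (hB b)"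
      unfolding SA.zimp_def unfolding hB_def RZ_def AB.B.R_def using z ab by auto
  next
    fix z assume zz: "z \<in> SA.zimp (hB a) (hB b)"
    then obtain P Q where z: "z = (P, Q)" "(P, Q) \<in> Z" unfolding SA.zimp_def by (cases z) auto
    have P: "AB.B.prime P" and Q: "AC.B.prime Q" and fe: "AB.f P = AC.f Q" using z inZ by auto
    have "\<forall>P'. AB.B.prime P' \<longrightarrow> AB.B.R P P' \<longrightarrow> a \<in> P' \<longrightarrow> b \<in> P'"
    proof (intro allI impI)
      fix P' assume P': "AB.B.prime P'" and r: "AB.B.R P P'" and a: "a \<in> P'"
      have "AB.A.R (AC.f Q) (AB.f P')" using AB.fwd[OF r] fe by simp
      from AC.backR[OF Q AB.f_prime[OF P'] this] obtain Q' where
        Q': "AC.B.prime Q'" "AC.B.R Q Q'" "AC.f Q' = AB.f P'" by blast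
      have "(P', Q') \<in> Z" using P' Q' inZ by auto
      moreover have "RZ z (P', Q')" unfolding RZ_def using z r Q' by simp
      ultimately have "(P', Q') \<in> hB b" using zz a unfolding SA.zimp_def hB_def by auto
      then show "b \<in> P'" unfolding hB_def by simp
    qed
    then have "imp B a b \<in> P" using AB.B.rep_imp[OF P ab] by simp
    then show "z \<in> hB (imp B a b)" unfolding hB_def using z by simp
  qed
  have hB_co: "hB (coimp B a b) = SA.zco (hB a) (hB b)" if ab: "a \<in> carrier B" "b \<in> carrier B" for a b
  proof (rule set_eqI, rule iffI)
    fix z assume "z \<in> hB (coimp B a b)"
    then obtain P Q where z: "z = (P, Q)" "(P, Q) \<in> Z" "coimp B a b \<in> P" unfolding hB_def by (cases z) auto
    have P: "AB.B.prime P" and Q: "AC.B.prime Q" and fe: "AB.f P = AC.f Q" using z inZ by auto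
    obtain P' where P': "AB.B.prime P'" "AB.B.R P' P" "a \<in> P'" "b \<notin> P'"
      using AB.B.rep_coimp[OF P ab] z by blast
    have "AB.A.R (AB.f P') (AC.f Q)" using AB.fwd[OF P'(2)] fe by simp
    from AC.backRinv[OF Q AB.f_prime[OF P'(1)] this] obtain Q' where
      Q': "AC.B.prime Q'" "AC.B.R Q' Q" "AC.f Q' = AB.f P'" by blast
    have "(P', Q') \<in> Z" using P' Q' inZ by auto
    moreover have "RZ (P', Q') z" unfolding RZ_def using z P' Q' by simp
    ultimately show "z \<in> SA.zco (hB a) (hB b)"
      unfolding SA.zco_def hB_def using z P' by auto
  next
    fix z assume zz: "z \<in> SA.zco (hB a) (hB b)"
    then obtain P Q P' Q' where z: "z = (P, Q)" "(P, Q) \<in> Z" "(P', Q') \<in> Z" "RZ (P', Q') z"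
      "a \<in> P'" "b \<notin> P'"
      unfolding SA.zco_def hB_def by (cases z) force
    have P: "AB.B.prime P" "AB.B.prime P'" using z inZ by auto
    have "AB.B.R P' P" using z unfolding RZ_def by simp
    then have "coimp B a b \<in> P" using AB.B.coimp_of_R[OF P(1) P(2) _ z(5) ab(2) z(6)] by simp
    then show "z \<in> hB (coimp B a b)" unfolding hB_def using z by simp
  qed
  have hB_ops: "\<forall>a\<in>carrier B. \<forall>b\<in>carrier B. hB (meet B a b) = hB a \<inter> hB b \<and> hB (join B a b) = hB a \<union> hB b
       \<and> hB (imp B a b) = SA.zimp (hB a) (hB b) \<and> hB (coimp B a b) = SA.zco (hB a) (hB b)"
  proof (intro ballI conjI)
    fix a b assume ab: "a \<in> carrier B" "b \<in> carrier B"
    show "hB (meet B a b) = hB a \<inter> hB b" unfolding hB_def Z_def using AB.B.prime_meet ab by auto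
    show "hB (join B a b) = hB a \<union> hB b" unfolding hB_def Z_def using AB.B.prime_join ab by auto
    show "hB (imp B a b) = SA.zimp (hB a) (hB b)" using hB_imp ab by simp
    show "hB (coimp B a b) = SA.zco (hB a) (hB b)" using hB_co ab by simp
  qed
  have hB_bot: "hB (bot B) = {}" unfolding hB_def Z_def using AB.B.prime_bot by auto
  have hB_top: "hB (top B) = Z" unfolding hB_def Z_def using AB.B.prime_top by auto
  have hB_inj: "inj_on hB (carrier B)"
  proof (rule inj_onI, rule ccontr)
    fix a b assume ab: "a \<in> carrier B" "b \<in> carrier B" and e: "hB a = hB b" and ne: "a \<noteq> b"
    have "\<exists>x y. x \<in> carrier B \<and> y \<in> carrier B \<and> \<not> leq B x y \<and> hB x = hB y"
      using AB.B.leq_antisym[OF ab] ab e ne by metis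
    then obtain x y where xy: "x \<in> carrier B" "y \<in> carrier B" "\<not> leq B x y" "hB x = hB y" by blast
    obtain P where P: "AB.B.prime P" "x \<in> P" "y \<notin> P" using AB.B.sep_prime[OF xy(1,2,3)] by blast
    obtain Q where Q: "AC.B.prime Q" "AC.f Q = AB.f P" using AC.surj[OF AB.f_prime[OF P(1)]] by blast
    have "(P, Q) \<in> hB x" unfolding hB_def using inZ P Q by auto
    moreover have "(P, Q) \<notin> hB y" unfolding hB_def using P by auto
    ultimately show False using xy by simp
  qed
  have hC_imp: "hC (imp C a b) = SA.zimp (hC a) (hC b)" if ab: "a \<in> carrier C" "b \<in> carrier C" for a b
  proof (rule set_eqI, rule iffI)
    fix z assume "z \<in> hC (imp C a b)"
    then obtain P Q where z: "z = (P, Q)" "(P, Q) \<in> Z" "imp C a b \<in> Q" unfolding hC_def by (cases z) auto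
    show "z \<in> SA.zimp (hC a) (hC b)"
      unfolding SA.zimp_def unfolding hC_def RZ_def AC.B.R_def using z ab by auto
  next
    fix z assume zz: "z \<in> SA.zimp (hC a) (hC b)"
    then obtain P Q where z: "z = (P, Q)" "(P, Q) \<in> Z" unfolding SA.zimp_def by (cases z) auto
    have P: "AB.B.prime P" and Q: "AC.B.prime Q" and fe: "AB.f P = AC.f Q" using z inZ by auto
    have "\<forall>Q'. AC.B.prime Q' \<longrightarrow> AC.B.R Q Q' \<longrightarrow> a \<in> Q' \<longrightarrow> b \<in> Q'"
    proof (intro allI impI)
      fix Q' assume Q': "AC.B.prime Q'" and r: "AC.B.R Q Q'" and a: "a \<in> Q'"
      have "AB.A.R (AB.f P) (AC.f Q')" using AC.fwd[OF r] fe by simp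
      from AB.backR[OF P AC.f_prime[OF Q'] this] obtain P' where
        P': "AB.B.prime P'" "AB.B.R P P'" "AB.f P' = AC.f Q'" by blast
      have "(P', Q') \<in> Z" using P' Q' inZ by auto
      moreover have "RZ z (P', Q')" unfolding RZ_def using z r P' by simp
      ultimately have "(P', Q') \<in> hC b" using zz a unfolding SA.zimp_def hC_def by auto
      then show "b \<in> Q'" unfolding hC_def by simp
    qed
    then have "imp C a b \<in> Q" using AC.B.rep_imp[OF Q ab] by simp
    then show "z \<in> hC (imp C a b)" unfolding hC_def using z by simp
  qed
  have hC_co: "hC (coimp C a b) = SA.zco (hC a) (hC b)" if ab: "a \<in> carrier C" "b \<in> carrier C" for a b
  proof (rule set_eqI, rule iffI)
    fix z assume "z \<in> hC (coimp C a b)"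
    then obtain P Q where z: "z = (P, Q)" "(P, Q) \<in> Z" "coimp C a b \<in> Q" unfolding hC_def by (cases z) auto
    have P: "AB.B.prime P" and Q: "AC.B.prime Q" and fe: "AB.f P = AC.f Q" using z inZ by auto
    obtain Q' where Q': "AC.B.prime Q'" "AC.B.R Q' Q" "a \<in> Q'" "b \<notin> Q'"
      using AC.B.rep_coimp[OF Q ab] z by blast
    have "AB.A.R (AC.f Q') (AB.f P)" using AC.fwd[OF Q'(2)] fe by simp
    from AB.backRinv[OF P AC.f_prime[OF Q'(1)] this] obtain P' where
      P': "AB.B.prime P'" "AB.B.R P' P" "AB.f P' = AC.f Q'" by blast
    have "(P', Q') \<in> Z" using P' Q' inZ by auto
    moreover have "RZ (P', Q') z" unfolding RZ_def using z P' Q' by simp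
    ultimately show "z \<in> SA.zco (hC a) (hC b)"
      unfolding SA.zco_def hC_def using z Q' by auto
  next
    fix z assume zz: "z \<in> SA.zco (hC a) (hC b)"
    then obtain P Q P' Q' where z: "z = (P, Q)" "(P, Q) \<in> Z" "(P', Q') \<in> Z" "RZ (P', Q') z"
      "a \<in> Q'" "b \<notin> Q'"
      unfolding SA.zco_def hC_def by (cases z) force
    have Q: "AC.B.prime Q" "AC.B.prime Q'" using z inZ by auto
    have "AC.B.R Q' Q" using z unfolding RZ_def by simp
    then have "coimp C a b \<in> Q" using AC.B.coimp_of_R[OF Q(1) Q(2) _ z(5) ab(2) z(6)] by simp
    then show "z \<in> hC (coimp C a b)" unfolding hC_def using z by simp
  qed
  have hC_ops: "\<forall>a\<in>carrier C. \<forall>b\<in>carrier C. hC (meet C a b) = hC a \<inter> hC b \<and> hC (join C a b) = hC a \<union> hC b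
       \<and> hC (imp C a b) = SA.zimp (hC a) (hC b) \<and> hC (coimp C a b) = SA.zco (hC a) (hC b)"
  proof (intro ballI conjI)
    fix a b assume ab: "a \<in> carrier C" "b \<in> carrier C"
    show "hC (meet C a b) = hC a \<inter> hC b" unfolding hC_def Z_def using AC.B.prime_meet ab by auto
    show "hC (join C a b) = hC a \<union> hC b" unfolding hC_def Z_def using AC.B.prime_join ab by auto
    show "hC (imp C a b) = SA.zimp (hC a) (hC b)" using hC_imp ab by simp
    show "hC (coimp C a b) = SA.zco (hC a) (hC b)" using hC_co ab by simp
  qed
  have hC_bot: "hC (bot C) = {}" unfolding hC_def Z_def using AC.B.prime_bot by auto
  have hC_top: "hC (top C) = Z" unfolding hC_def Z_def using AC.B.prime_top by auto
  have hC_inj: "inj_on hC (carrier C)"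
  proof (rule inj_onI, rule ccontr)
    fix a b assume ab: "a \<in> carrier C" "b \<in> carrier C" and e: "hC a = hC b" and ne: "a \<noteq> b"
    have "\<exists>x y. x \<in> carrier C \<and> y \<in> carrier C \<and> \<not> leq C x y \<and> hC x = hC y"
      using AC.B.leq_antisym[OF ab] ab e ne by metis
    then obtain x y where xy: "x \<in> carrier C" "y \<in> carrier C" "\<not> leq C x y" "hC x = hC y" by blast
    obtain Q where Q: "AC.B.prime Q" "x \<in> Q" "y \<notin> Q" using AC.B.sep_prime[OF xy(1,2,3)] by blast
    obtain P where P: "AB.B.prime P" "AB.f P = AC.f Q" using AB.surj[OF AC.f_prime[OF Q(1)]] by blast
    have "(P, Q) \<in> hC x" unfolding hC_def using inZ P Q by auto
    moreover have "(P, Q) \<notin> hC y" unfolding hC_def using Q by auto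
    ultimately show False using xy by simp
  qed
  have comm: "\<forall>a\<in>carrier A. SA.rep (hB (i a)) = SA.rep (hC (j a))"
  proof
    fix a assume a: "a \<in> carrier A"
    have "hB (i a) = hC (j a)"
    proof (rule set_eqI)
      fix z show "z \<in> hB (i a) \<longleftrightarrow> z \<in> hC (j a)"
      proof (cases z)
        case (Pair P Q)
        show ?thesis
        proof (cases "z \<in> Z")
          case True
          then have fe: "AB.f P = AC.f Q" using Pair inZ by auto
          have "i a \<in> P \<longleftrightarrow> a \<in> AB.f P" unfolding AB.f_def using a by simp
          moreover have "j a \<in> Q \<longleftrightarrow> a \<in> AC.f Q" unfolding AC.f_def using a by simp
          ultimately show ?thesis unfolding hB_def hC_def using Pair True fe by simp
        next
          case False then show ?thesis unfolding hB_def hC_def by simp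
        qed
      qed
    qed
    then show "SA.rep (hB (i a)) = SA.rep (hC (j a))" by simp
  qed
  have eB: "whb_emb B SA.D (\<lambda>b. SA.rep (hB b))"
    using SA.hom[of hB B, OF SA.gS.gen1 hB_bot hB_top hB_ops hB_inj] .
  have eC: "whb_emb C SA.D (\<lambda>c. SA.rep (hC c))"
    using SA.hom[of hC C, OF SA.gS.gen2 hC_bot hC_top hC_ops hC_inj] .
  show ?thesis using SA.D_alg eB eC comm by blast
qed

end
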